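(* Let $K$ be a $d$-dimensional convex body with $o\in\mathrm{int}(K)$ and let $0\le\varepsilon<1$. Let $\{v_i+\lambda_iK: i\in I\}$ be a family of positive homothets of $K$ such that $v_i\notin v_j+\lambda_j\,\mathrm{int}(K)$ for all distinct $i,j\in I$, and for all $i\in I$: $\lambda_i\ge1$, $(v_i+\lambda_iK)\cap(-\varepsilon K)\neq\emptyset$ and $o\notin v_i+\lambda_i\,\mathrm{int}(K)$. Then $|I|\le P\!\left(K,\frac{2}{1-\varepsilon}\right)$.
   Context: A convex body is a compact convex set with non-empty interior. For a convex body $L$ with $o\in\mathrm{int}(L)$, $\|x\|_L=\inf\{\mu>0:x\in\mu L\}$. $P(K,\lambda)$ is the maximum number of points $p_1,\dots,p_m$ such that $\max_{i<j}\|p_i-p_j\|_{\frac12(K-K)}\big/\min_{i<j}\|p_i-p_j\|_{K\cap-K}\le\lambda$. *)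

theory Defs
  imports "HOL-Analysis.Analysis"
begin

definition convex_body :: "'a::euclidean_space set \<Rightarrow> bool" where
  "convex_body K \<longleftrightarrow> compact K \<and> convex K \<and> interior K \<noteq> {}"

definition gauge_norm :: "'a::euclidean_space set \<Rightarrow> 'a \<Rightarrow> real" where
  "gauge_norm L x = Inf {\<mu>. \<mu> > 0 \<and> x \<in> (\<lambda>y. \<mu> *\<^sub>R y) ` L}"

definition diff_body :: "'a::euclidean_space set \<Rightarrow> 'a set" where
  "diff_body K = (\<lambda>y. (1/2) *\<^sub>R y) ` {x - y | x y. x \<in> K \<and> y \<in> K}"

definition sym_body :: "'a::euclidean_space set \<Rightarrow> 'a set" where
  "sym_body K = K \<inter> uminus ` K"

text \<open>A finite point set S is admissible for ratio lam if every distance in the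
norm of (K-K)/2 is at most lam times every nonzero distance in the norm of K cap -K,
i.e. max/min <= lam (vacuous for at most one point).\<close>
definition ratio_ok :: "'a::euclidean_space set \<Rightarrow> real \<Rightarrow> 'a set \<Rightarrow> bool" where
  "ratio_ok K lam S \<longleftrightarrow> (\<forall>p\<in>S. \<forall>q\<in>S. \<forall>r\<in>S. \<forall>s\<in>S. p \<noteq> q \<longrightarrow> r \<noteq> s \<longrightarrow>
      gauge_norm (diff_body K) (p - q) \<le> lam * gauge_norm (sym_body K) (r - s))"

definition P_num :: "'a::euclidean_space set \<Rightarrow> real \<Rightarrow> enat" where
  "P_num K lam = Sup {enat (card S) | S. finite S \<and> ratio_ok K lam S}"

definition ecard :: "'i set \<Rightarrow> enat" where
  "ecard I = (if finite I then enat (card I) else \<infinity>)"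

end

theory Submission
  imports Defs
begin

lemma scale_mem:
  fixes L :: "'a::euclidean_space set"
  assumes "\<mu> \<noteq> 0"
  shows "x \<in> (\<lambda>y. \<mu> *\<^sub>R y) ` L \<longleftrightarrow> inverse \<mu> *\<^sub>R x \<in> L"
proof
  assume "x \<in> (\<lambda>y. \<mu> *\<^sub>R y) ` L"
  then obtain y where "y \<in> L" "x = \<mu> *\<^sub>R y" by auto
  then show "inverse \<mu> *\<^sub>R x \<in> L" using assms by simp
next
  assume "inverse \<mu> *\<^sub>R x \<in> L"
  moreover have "x = \<mu> *\<^sub>R (inverse \<mu> *\<^sub>R x)" using assms by simp
  ultimately show "x \<in> (\<lambda>y. \<mu> *\<^sub>R y) ` L" by blast
qed

lemma sum_mem:
  fixes L :: "'a::euclidean_space set"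
  assumes "convex L" "a \<ge> 0" "b \<ge> 0" "a + b > 0" "x \<in> L" "y \<in> L"
  shows "a *\<^sub>R x + b *\<^sub>R y \<in> (\<lambda>z. (a + b) *\<^sub>R z) ` L"
proof -
  define c where "c = a + b"
  have c: "c > 0" using assms c_def by simp
  have "(a / c) *\<^sub>R x + (b / c) *\<^sub>R y \<in> L"
    using assms(1) assms(5,6) unfolding convex_def
    by (metis (no_types, lifting) add_divide_distrib assms(2,3) c c_def divide_nonneg_pos divide_self_if less_irrefl)
  moreover have "a *\<^sub>R x + b *\<^sub>R y = c *\<^sub>R ((a / c) *\<^sub>R x + (b / c) *\<^sub>R y)"
    using c by (simp add: scaleR_add_right)
  ultimately show ?thesis unfolding c_def by blast
qed

lemma shrink_int:
  fixes L :: "'a::euclidean_space set"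
  assumes "convex L" "0 \<in> interior L" "0 < s" "s < l" "x \<in> (\<lambda>y. s *\<^sub>R y) ` L"
  shows "x \<in> (\<lambda>y. l *\<^sub>R y) ` interior L"
proof -
  obtain y where y: "y \<in> L" "x = s *\<^sub>R y" using assms(5) by auto
  have "y - (1 - s / l) *\<^sub>R (y - 0) \<in> interior L"
    using assms y by (intro mem_interior_convex_shrink) auto
  moreover have "y - (1 - s / l) *\<^sub>R (y - 0) = (s / l) *\<^sub>R y"
    by (simp add: algebra_simps)
  moreover have "x = l *\<^sub>R ((s / l) *\<^sub>R y)" using y assms by simp
  ultimately show ?thesis by (metis image_eqI)
qed

lemma g_le:
  assumes "\<mu> > 0" "x \<in> (\<lambda>y. \<mu> *\<^sub>R y) ` L"
  shows "gauge_norm L x \<le> \<mu>"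
  unfolding gauge_norm_def
  by (rule cInf_lower) (use assms in \<open>auto intro: bdd_belowI[where m=0]\<close>)

lemma aux_ineq: fixes n e::real assumes "0 \<le> n" "e > 0" shows "n * e / (2 * (n + 1)) < e"
proof -
  have p: "0 < 2 * (n + 1)" using assms by simp
  have q: "0 \<le> n * e" using assms by simp
  have r: "e * (2 * (n + 1)) = 2 * (n * e) + 2 * e" by (simp add: algebra_simps)
  have "n * e < e * (2 * (n + 1))" using q r assms by linarith
  then show ?thesis using p by (simp add: divide_less_eq)
qed

lemma two_div_mult: "(x::real) \<noteq> 0 \<Longrightarrow> 2 / x * x = 2" by simp

lemma absorb:
  fixes L :: "'a::euclidean_space set"
  assumes "0 \<in> interior L"
  shows "\<exists>\<mu>>0. x \<in> (\<lambda>y. \<mu> *\<^sub>R y) ` L"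
proof -
  obtain e where e: "e > 0" "ball 0 e \<subseteq> L" using assms mem_interior by blast
  define \<mu> where "\<mu> = 2 * (norm x + 1) / e"
  have mu: "\<mu> > 0" 
  proof -
    have "0 < 2 * (norm x + 1)" by (simp add: add_nonneg_pos)
    then show ?thesis unfolding \<mu>_def using e(1) by (rule divide_pos_pos)
  qed
  have "norm (inverse \<mu> *\<^sub>R x) = norm x * e / (2 * (norm x + 1))"
    using e by (simp add: \<mu>_def field_simps)
  also have "\<dots> < e"
    using e by (intro aux_ineq) auto
  finally have "inverse \<mu> *\<^sub>R x \<in> L" using e by auto
  then show ?thesis using mu scale_mem[of \<mu> x L] by auto
qed

lemma g_lt:
  fixes L :: "'a::euclidean_space set"
  assumes "0 \<in> interior L" "gauge_norm L x < l"
  shows "\<exists>s. 0 < s \<and> s < l \<and> x \<in> (\<lambda>y. s *\<^sub>R y) ` L"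
proof -
  have ne: "{\<mu>. \<mu> > 0 \<and> x \<in> (\<lambda>y. \<mu> *\<^sub>R y) ` L} \<noteq> {}" using absorb[OF assms(1)] by auto
  from cInf_lessD[OF ne] assms(2) show ?thesis unfolding gauge_norm_def by blast
qed

lemma g_sym_ge:
  fixes K :: "'a::euclidean_space set"
  assumes "0 \<in> interior K"
  shows "gauge_norm K x \<le> gauge_norm (sym_body K) x \<and> gauge_norm K (- x) \<le> gauge_norm (sym_body K) x"
proof -
  obtain e where e: "e > 0" "ball 0 e \<subseteq> K" using assms mem_interior by blast
  have "ball 0 e \<subseteq> sym_body K"
  proof
    fix y :: 'a assume y: "y \<in> ball 0 e"
    then have "- y \<in> K" using e by auto
    then have "y \<in> uminus ` K" by (metis image_eqI minus_minus)
    then show "y \<in> sym_body K" using y e unfolding sym_body_def by auto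
  qed
  then have "0 \<in> interior (sym_body K)" using e mem_interior by blast
  then have ne: "{\<mu>. \<mu> > 0 \<and> x \<in> (\<lambda>y. \<mu> *\<^sub>R y) ` sym_body K} \<noteq> {}" using absorb by auto
  have A: "gauge_norm K x \<le> \<mu>" and B: "gauge_norm K (-x) \<le> \<mu>"
    if "\<mu> \<in> {\<mu>. \<mu> > 0 \<and> x \<in> (\<lambda>y. \<mu> *\<^sub>R y) ` sym_body K}" for \<mu>
  proof -
    from that obtain y where y: "\<mu> > 0" "y \<in> K" "- y \<in> K" "x = \<mu> *\<^sub>R y"
      unfolding sym_body_def by auto
    show "gauge_norm K x \<le> \<mu>" using y by (intro g_le) auto
    have "- x = \<mu> *\<^sub>R (- y)" using y by simp
    then show "gauge_norm K (-x) \<le> \<mu>" using y by (metis g_le image_eqI)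
  qed
  show ?thesis unfolding gauge_norm_def[of "sym_body K"]
    using cInf_greatest[OF ne A] cInf_greatest[OF ne B] by auto
qed

theorem lemma20:
  fixes K :: "'a::euclidean_space set" and \<epsilon> :: real
    and I :: "'i set" and v :: "'i \<Rightarrow> 'a" and lam :: "'i \<Rightarrow> real"
  assumes "convex_body K" and "0 \<in> interior K"
    and "0 \<le> \<epsilon>" and "\<epsilon> < 1"
    and "\<And>i j. i \<in> I \<Longrightarrow> j \<in> I \<Longrightarrow> i \<noteq> j \<Longrightarrow>
           v i \<notin> (\<lambda>x. v j + lam j *\<^sub>R x) ` interior K"
    and "\<And>i. i \<in> I \<Longrightarrow> lam i \<ge> 1"
    and "\<And>i. i \<in> I \<Longrightarrow> (\<lambda>x. v i + lam i *\<^sub>R x) ` K \<inter> (\<lambda>x. (- \<epsilon>) *\<^sub>R x) ` K \<noteq> {}"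
    and "\<And>i. i \<in> I \<Longrightarrow> 0 \<notin> (\<lambda>x. v i + lam i *\<^sub>R x) ` interior K"
  shows "ecard I \<le> P_num K (2 / (1 - \<epsilon>))"
proof -
  define \<mu> where "\<mu> i = lam i + \<epsilon>" for i
  define p where "p i = inverse (\<mu> i) *\<^sub>R v i" for i
  have cvx: "convex K" using assms(1) unfolding convex_body_def by auto
  have mu1: "\<mu> i \<ge> 1" if "i \<in> I" for i using assms(3) assms(6)[OF that] unfolding \<mu>_def by linarith
  have vp: "\<mu> i *\<^sub>R p i = v i" if "i \<in> I" for i using mu1[OF that] unfolding p_def by simp
  have negp: "- p i \<in> K" if i: "i \<in> I" for i
  proof -
    from assms(7)[OF i] obtain x y where xy: "x \<in> K" "y \<in> K" "v i + lam i *\<^sub>R x = (- \<epsilon>) *\<^sub>R y"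
      by auto
    have "- v i = lam i *\<^sub>R x + \<epsilon> *\<^sub>R y" using xy(3)
      by (metis add.commute add_diff_cancel_left' diff_minus_eq_add minus_diff_eq scaleR_minus_left)
    moreover have "lam i *\<^sub>R x + \<epsilon> *\<^sub>R y \<in> (\<lambda>z. (lam i + \<epsilon>) *\<^sub>R z) ` K"
      using assms(3) assms(6)[OF i] xy cvx by (intro sum_mem) auto
    ultimately have "inverse (\<mu> i) *\<^sub>R (- v i) \<in> K"
      using scale_mem[of "\<mu> i" "- v i" K] mu1[OF i] unfolding \<mu>_def by auto
    then show ?thesis unfolding p_def by simp
  qed
  have pair: "1 - \<epsilon> \<le> gauge_norm K (p i - p j)"
    if ij: "i \<in> I" "j \<in> I" "i \<noteq> j" "\<mu> i \<le> \<mu> j" for i j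
  proof (rule ccontr)
    assume "\<not> 1 - \<epsilon> \<le> gauge_norm K (p i - p j)"
    then have "gauge_norm K (p i - p j) < 1 - \<epsilon>" by simp
    from g_lt[OF assms(2) this] obtain t where t: "0 < t" "t < 1 - \<epsilon>"
      "p i - p j \<in> (\<lambda>y. t *\<^sub>R y) ` K" by auto
    then obtain z where z: "z \<in> K" "p i - p j = t *\<^sub>R z" by auto
    have e1: "(\<mu> i * t) *\<^sub>R z = \<mu> i *\<^sub>R (p i - p j)" using z by simp
    have "(\<mu> i * t) *\<^sub>R z + (\<mu> j - \<mu> i) *\<^sub>R (- p j) = \<mu> i *\<^sub>R p i - \<mu> j *\<^sub>R p j"
      unfolding e1 by (simp add: algebra_simps)
    also have "\<dots> = v i - v j" using vp ij by simp
    finally have veq: "v i - v j = (\<mu> i * t) *\<^sub>R z + (\<mu> j - \<mu> i) *\<^sub>R (- p j)" by simp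
    have mi: "\<mu> i * t > 0" using mu1[OF ij(1)] t by simp
    have mem: "v i - v j \<in> (\<lambda>y. (\<mu> i * t + (\<mu> j - \<mu> i)) *\<^sub>R y) ` K"
      unfolding veq using mi ij(4) z negp[OF ij(2)] cvx by (intro sum_mem) auto
    have lt: "\<mu> i * t + (\<mu> j - \<mu> i) < lam j"
    proof -
      have a: "\<mu> i * t < \<mu> i * (1 - \<epsilon>)" using mu1[OF ij(1)] t by (intro mult_strict_left_mono) auto
      have b: "\<epsilon> * 1 \<le> \<epsilon> * \<mu> i" using mu1[OF ij(1)] assms(3) by (intro mult_left_mono) auto
      have c: "\<mu> i * (1 - \<epsilon>) = \<mu> i - \<epsilon> * \<mu> i" by (simp add: algebra_simps)
      show ?thesis using a b c unfolding \<mu>_def by simp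
    qed
    have sp: "0 < \<mu> i * t + (\<mu> j - \<mu> i)" using mi ij(4) by simp
    have "v i - v j \<in> (\<lambda>y. lam j *\<^sub>R y) ` interior K"
      by (rule shrink_int[OF cvx assms(2) sp lt mem])
    then obtain y where "y \<in> interior K" "v i - v j = lam j *\<^sub>R y" by auto
    then have "v i \<in> (\<lambda>x. v j + lam j *\<^sub>R x) ` interior K"
      by (metis (no_types, lifting) diff_add_cancel add.commute image_eqI)
    then show False using assms(5)[OF ij(1,2,3)] by blast
  qed
  have g0: "gauge_norm K 0 < 1 - \<epsilon>"
  proof -
    have "0 \<in> K" using assms(2) interior_subset by blast
    then have "(0::'a) \<in> (\<lambda>y. ((1 - \<epsilon>) / 2) *\<^sub>R y) ` K" by (metis image_eqI scaleR_zero_right)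
    then have "gauge_norm K 0 \<le> (1 - \<epsilon>) / 2" using assms(4) by (intro g_le) auto
    then show ?thesis using assms(4) by simp
  qed
  have inj: "inj_on p I"
  proof (rule inj_onI)
    fix i j assume ij: "i \<in> I" "j \<in> I" "p i = p j"
    show "i = j"
    proof (rule ccontr)
      assume ne: "i \<noteq> j"
      have "1 - \<epsilon> \<le> gauge_norm K 0"
      proof (cases "\<mu> i \<le> \<mu> j")
        case True then show ?thesis using pair[OF ij(1,2) ne] ij(3) by simp
      next
        case False then show ?thesis using pair[OF ij(2,1)] ne ij(3) by simp
      qed
      then show False using g0 by simp
    qed
  qed
  have sep: "1 - \<epsilon> \<le> gauge_norm (sym_body K) (p i - p j)"
    if ij: "i \<in> I" "j \<in> I" "i \<noteq> j" for i j
  proof (cases "\<mu> i \<le> \<mu> j")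
    case True
    then show ?thesis using pair[OF ij True] g_sym_ge[OF assms(2), of "p i - p j"] by linarith
  next
    case False
    then have "1 - \<epsilon> \<le> gauge_norm K (p j - p i)" using pair[OF ij(2,1)] ij(3) by simp
    moreover have "gauge_norm K (p j - p i) \<le> gauge_norm (sym_body K) (p i - p j)"
      using g_sym_ge[OF assms(2), of "p i - p j"] by simp
    ultimately show ?thesis by linarith
  qed
  have up: "gauge_norm (diff_body K) (p i - p j) \<le> 2" if ij: "i \<in> I" "j \<in> I" for i j
  proof -
    have "(- p j) - (- p i) \<in> {x - y | x y. x \<in> K \<and> y \<in> K}" using negp ij by blast
    then have "(1/2) *\<^sub>R ((- p j) - (- p i)) \<in> diff_body K" unfolding diff_body_def by blast
    moreover have "p i - p j = 2 *\<^sub>R ((1/2) *\<^sub>R ((- p j) - (- p i)))" by simp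
    ultimately have "p i - p j \<in> (\<lambda>y. 2 *\<^sub>R y) ` diff_body K" by (metis image_eqI)
    then show ?thesis by (intro g_le) auto
  qed
  have ok: "ratio_ok K (2 / (1 - \<epsilon>)) (p ` J)" if J: "J \<subseteq> I" for J
  proof -
    have core: "gauge_norm (diff_body K) (a - b) \<le> 2 / (1 - \<epsilon>) * gauge_norm (sym_body K) (c - d)"
      if abcd: "a \<in> p ` J" "b \<in> p ` J" "c \<in> p ` J" "d \<in> p ` J" "a \<noteq> b" "c \<noteq> d" for a b c d
    proof -
    obtain ia where ia: "ia \<in> J" "a = p ia" using abcd(1) by auto
    obtain ib where ib: "ib \<in> J" "b = p ib" using abcd(2) by auto
    obtain ic where ic: "ic \<in> J" "c = p ic" using abcd(3) by auto
    obtain id where id: "id \<in> J" "d = p id" using abcd(4) by auto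
    have ii: "ia \<in> I" "ib \<in> I" "ic \<in> I" "id \<in> I" "a = p ia" "b = p ib" "c = p ic" "d = p id"
      using ia ib ic id J by auto
    have "ic \<noteq> id" using abcd(6) ic(2) id(2) by auto
    then have s: "1 - \<epsilon> \<le> gauge_norm (sym_body K) (c - d)" using sep[OF ii(3) ii(4)] ii(7,8) by simp
    have pos: "2 / (1 - \<epsilon>) > 0" using assms(4) by simp
    have ne: "1 - \<epsilon> \<noteq> 0" using assms(4) by simp
    have eq2: "2 / (1 - \<epsilon>) * (1 - \<epsilon>) = 2" by (rule two_div_mult[OF ne])
    have le: "2 / (1 - \<epsilon>) * (1 - \<epsilon>) \<le> 2 / (1 - \<epsilon>) * gauge_norm (sym_body K) (c - d)"
      by (rule mult_left_mono[OF s]) (use pos in simp)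
    have u: "gauge_norm (diff_body K) (a - b) \<le> 2" using up[OF ii(1) ii(2)] ii(5,6) by simp
    show ?thesis
      using eq2 le u by linarith
    qed
    show ?thesis unfolding ratio_ok_def using core by simp
  qed
  have fin: "enat (card J) \<le> P_num K (2 / (1 - \<epsilon>))" if J: "finite J" "J \<subseteq> I" for J
  proof -
    have c: "card (p ` J) = card J" using inj J by (intro card_image) (rule inj_on_subset)
    have f: "finite (p ` J)" using J by simp
    have "enat (card (p ` J)) \<in> {enat (card S) | S. finite S \<and> ratio_ok K (2 / (1 - \<epsilon>)) S}"
      using ok[OF J(2)] f by blast
    then have "enat (card J) \<in> {enat (card S) | S. finite S \<and> ratio_ok K (2 / (1 - \<epsilon>)) S}"
      unfolding c .
    then show ?thesis unfolding P_num_def by (rule Sup_upper)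
  qed
  show ?thesis
  proof (cases "finite I")
    case True
    then show ?thesis using fin[of I] unfolding ecard_def by simp
  next
    case False
    have "enat n \<le> P_num K (2 / (1 - \<epsilon>))" for n
    proof -
      obtain J where "J \<subseteq> I" "finite J" "card J = n" using infinite_arbitrarily_large[OF False] by blast
      then show ?thesis using fin by blast
    qed
    then have "P_num K (2 / (1 - \<epsilon>)) = \<infinity>"
      by (metis enat_ord_simps(2) enat_ord_simps(1) infinity_ileE lessI not_le enat.exhaust)
    then show ?thesis unfolding ecard_def by simp
  qed
qed

end
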